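(* Let $X_1,X_2,\dots$ be i.i.d. $\mathbb{Z}$-valued random variables and $S_n=\sum_{j=1}^nX_j$. For every $N\in\mathbb{N}\setminus\{1\}$, $$\frac{1}{1+\sum_{i=1}^{N-1}P\{S_i\in[0]_N\}}\le\mathbb{P}^{(N)}_{\mathcal{R}}\Big(\bigcup_{n=1}^N\{\mathcal{R}^{(N)}_n=0\}\Big)\le\frac{2}{1+\sum_{i=1}^{N-1}P\{S_i\in[0]_N\}}.$$
   Context: $X_j$ live on $(\Omega,\mathcal{F},P)$. $[y]_N=\{y+kN:k\in\mathbb{Z}\}$. For $N\in\mathbb{N}$, $X^{(N)}_0$ is uniform on $\{0,\dots,N-1\}$ under $(\Omega_N,\mathcal{F}_N,\mu_N)$; $(b\bmod N)$ is the remainder of $b\in\mathbb{Z}$ divided by $N$; $\mathcal{R}^{(N)}_n=(X^{(N)}_0+S_n\bmod N)$; $\mathbb{P}^{(N)}_{\mathcal{R}}=\mu_N\times P$. *)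

theory Defs
  imports "HOL-Probability.Probability"
begin

definition partial_sum :: "(nat \<Rightarrow> 'a \<Rightarrow> int) \<Rightarrow> nat \<Rightarrow> 'a \<Rightarrow> int" where
  "partial_sum X n \<omega> = (\<Sum>j\<in>{1..n}. X j \<omega>)"

text \<open>The measure mu_N x P: X_0^(N) uniform on {0,...,N-1}, independent of the walk.\<close>
definition rw_mod_space :: "nat \<Rightarrow> 'a measure \<Rightarrow> (nat \<times> 'a) measure" where
  "rw_mod_space N M = measure_pmf (pmf_of_set {0..<N}) \<Otimes>\<^sub>M M"

definition R_mod :: "nat \<Rightarrow> (nat \<Rightarrow> 'a \<Rightarrow> int) \<Rightarrow> nat \<Rightarrow> nat \<times> 'a \<Rightarrow> int" where
  "R_mod N X n p = (int (fst p) + partial_sum X n (snd p)) mod int N"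

end

theory Submission imports Defs begin

lemma card_last_occ:
  fixes g :: "nat \<Rightarrow> 'b"
  shows "card {n\<in>{1..N}. \<forall>j\<in>{n<..N}. g j \<noteq> g n} = card (g ` {1..N})"
proof -
  have "bij_betw g {n\<in>{1..N}. \<forall>j\<in>{n<..N}. g j \<noteq> g n} (g ` {1..N})"
  proof (rule bij_betw_imageI)
    show "inj_on g {n\<in>{1..N}. \<forall>j\<in>{n<..N}. g j \<noteq> g n}"
    proof (rule inj_onI)
      fix a b assume a: "a \<in> {n\<in>{1..N}. \<forall>j\<in>{n<..N}. g j \<noteq> g n}" and b: "b \<in> {n\<in>{1..N}. \<forall>j\<in>{n<..N}. g j \<noteq> g n}" and e: "g a = g b"
      show "a = b"
      proof (rule ccontr)
        assume "a \<noteq> b"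
        then have "a < b \<or> b < a" by auto
        then show False using a b e by auto
      qed
    qed
    show "g ` {n\<in>{1..N}. \<forall>j\<in>{n<..N}. g j \<noteq> g n} = g ` {1..N}"
    proof
      show "g ` {n\<in>{1..N}. \<forall>j\<in>{n<..N}. g j \<noteq> g n} \<subseteq> g ` {1..N}" by auto
    next
      show "g ` {1..N} \<subseteq> g ` {n\<in>{1..N}. \<forall>j\<in>{n<..N}. g j \<noteq> g n}"
      proof
        fix v assume "v \<in> g ` {1..N}"
        then obtain n0 where n0: "n0 \<in> {1..N}" "g n0 = v" by auto
        define K where "K = {n\<in>{1..N}. g n = v}"
        have fK: "finite K" "n0 \<in> K" unfolding K_def using n0 by auto
        define n where "n = Max K"
        have nK: "n \<in> K" unfolding n_def using fK by (intro Max_in) auto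
        have "\<forall>j\<in>{n<..N}. g j \<noteq> g n"
        proof (intro ballI notI)
          fix j assume j: "j \<in> {n<..N}" and "g j = g n"
          then have "j \<in> K" using nK unfolding K_def by auto
          then have "j \<le> n" unfolding n_def using fK by simp
          then show False using j by simp
        qed
        then show "v \<in> g ` {n\<in>{1..N}. \<forall>j\<in>{n<..N}. g j \<noteq> g n}"
          using nK unfolding K_def by (auto intro!: image_eqI[where x=n])
      qed
    qed
  qed
  then show ?thesis by (rule bij_betw_same_card)
qed

lemma card_residues:
  fixes s :: "nat \<Rightarrow> int" and N :: nat
  assumes N: "N > 0"
  shows "card {u\<in>{0..<N}. \<exists>n\<in>{1..N}. (int u + s n) mod int N = 0}
       = card {n\<in>{1..N}. \<forall>j\<in>{n<..N}. (s j - s n) mod int N \<noteq> 0}"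
proof -
  define g where "g n = s n mod int N" for n
  have eq1: "(s j - s n) mod int N \<noteq> 0 \<longleftrightarrow> g j \<noteq> g n" for j n
    unfolding g_def by (simp add: mod_eq_dvd_iff mod_eq_0_iff_dvd)
  have eq2: "(int u + s n) mod int N = 0 \<longleftrightarrow> g n = (- int u) mod int N" for u n
    unfolding g_def by (simp add: mod_eq_dvd_iff mod_eq_0_iff_dvd add.commute)
  have "bij_betw (\<lambda>u. (- int u) mod int N) {u\<in>{0..<N}. \<exists>n\<in>{1..N}. (int u + s n) mod int N = 0} (g ` {1..N})"
  proof (rule bij_betw_imageI)
    show "inj_on (\<lambda>u. (- int u) mod int N) {u\<in>{0..<N}. \<exists>n\<in>{1..N}. (int u + s n) mod int N = 0}"
    proof (rule inj_onI)
      fix a b assume a: "a \<in> {u\<in>{0..<N}. \<exists>n\<in>{1..N}. (int u + s n) mod int N = 0}"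
        and b: "b \<in> {u\<in>{0..<N}. \<exists>n\<in>{1..N}. (int u + s n) mod int N = 0}"
        and e: "(- int a) mod int N = (- int b) mod int N"
      have "int N dvd (int b - int a)" using e by (simp add: mod_eq_dvd_iff)
      moreover have "\<bar>int b - int a\<bar> < int N" using a b by auto
      ultimately have "int b - int a = 0"
        using dvd_imp_le_int[of "int b - int a" "int N"] by auto
      then show "a = b" by simp
    qed
    show "(\<lambda>u. (- int u) mod int N) ` {u\<in>{0..<N}. \<exists>n\<in>{1..N}. (int u + s n) mod int N = 0} = g ` {1..N}"
    proof
      show "(\<lambda>u. (- int u) mod int N) ` {u\<in>{0..<N}. \<exists>n\<in>{1..N}. (int u + s n) mod int N = 0} \<subseteq> g ` {1..N}"
      proof
        fix v assume "v \<in> (\<lambda>u. (- int u) mod int N) ` {u\<in>{0..<N}. \<exists>n\<in>{1..N}. (int u + s n) mod int N = 0}"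
        then obtain u n where "v = (- int u) mod int N" "n \<in> {1..N}" "(int u + s n) mod int N = 0" by auto
        then show "v \<in> g ` {1..N}" using eq2 by (auto intro!: image_eqI[where x=n])
      qed
    next
      show "g ` {1..N} \<subseteq> (\<lambda>u. (- int u) mod int N) ` {u\<in>{0..<N}. \<exists>n\<in>{1..N}. (int u + s n) mod int N = 0}"
      proof
        fix v assume "v \<in> g ` {1..N}"
        then obtain n where n: "n \<in> {1..N}" "v = g n" by auto
        define u where "u = nat ((- v) mod int N)"
        have v: "0 \<le> v" "v < int N" using N unfolding n g_def by auto
        have iu: "int u = (- v) mod int N" unfolding u_def using N by simp
        have "(- v) mod int N < int N" using N by simp
        then have u: "u < N" using iu by linarith
        have "(- int u) mod int N = v"
          unfolding iu using v by (simp add: mod_minus_eq)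
        then show "v \<in> (\<lambda>u. (- int u) mod int N) ` {u\<in>{0..<N}. \<exists>n\<in>{1..N}. (int u + s n) mod int N = 0}"
          using u n eq2 by (auto intro!: image_eqI[where x=u])
      qed
    qed
  qed
  then have "card {u\<in>{0..<N}. \<exists>n\<in>{1..N}. (int u + s n) mod int N = 0} = card (g ` {1..N})"
    by (rule bij_betw_same_card)
  also have "\<dots> = card {n\<in>{1..N}. \<forall>j\<in>{n<..N}. g j \<noteq> g n}" by (rule card_last_occ[symmetric])
  also have "\<dots> = card {n\<in>{1..N}. \<forall>j\<in>{n<..N}. (s j - s n) mod int N \<noteq> 0}" using eq1 by simp
  finally show ?thesis .
qed

lemma l1: "(1::real) \<le> a \<Longrightarrow> 0 < n \<Longrightarrow> n \<le> a*b \<Longrightarrow> 1/a \<le> b/n"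
  by (simp add: divide_le_eq le_divide_eq mult.commute)
lemma l2: "(1::real) \<le> a \<Longrightarrow> 0 < n \<Longrightarrow> a*b \<le> 2*n \<Longrightarrow> b/n \<le> 2/a"
  by (simp add: divide_le_eq le_divide_eq mult.commute)

locale rws = prob_space M for M :: "'a measure" +
  fixes X :: "nat \<Rightarrow> 'a \<Rightarrow> int" and N :: nat
  assumes ind: "indep_vars (\<lambda>_. count_space UNIV) X {1..}"
  and ident: "\<And>i. i \<ge> 1 \<Longrightarrow> distr M (count_space UNIV) (X i) = distr M (count_space UNIV) (X 1)"
  and N2: "N \<ge> 2"
begin

definition W :: "nat \<Rightarrow> nat \<Rightarrow> 'a \<Rightarrow> int list" where
  "W k l \<omega> = map (\<lambda>i. X (k+i) \<omega>) [1..<l+1]"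

lemma X_meas: "i \<ge> 1 \<Longrightarrow> X i \<in> measurable M (count_space UNIV)"
  using ind unfolding indep_vars_def by auto

lemma W_Suc: "W k (Suc l) \<omega> = W k l \<omega> @ [X (k + Suc l) \<omega>]"
  by (simp add: W_def)

lemma W_meas: "W k l \<in> measurable M (count_space UNIV)"
proof (induction l)
  case 0
  then show ?case by (simp add: W_def)
next
  case (Suc l)
  have "(\<lambda>\<omega>. (\<lambda>i \<omega>. W k l \<omega> @ [i]) (X (k + Suc l) \<omega>) \<omega>) \<in> measurable M (count_space UNIV)"
    by (rule measurable_compose_countable'[where I=UNIV])
       (auto intro: measurable_compose[OF Suc measurable_count_space] X_meas)
  then show ?case by (simp add: W_Suc)
qed

lemma prob_X: "i \<ge> 1 \<Longrightarrow> prob (X i -` A \<inter> space M) = prob (X 1 -` A \<inter> space M)"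
proof -
  assume i: "i \<ge> 1"
  have "prob (X i -` A \<inter> space M) = measure (distr M (count_space UNIV) (X i)) A"
    by (rule measure_distr[symmetric]) (auto intro: X_meas i)
  also have "\<dots> = measure (distr M (count_space UNIV) (X 1)) A" using ident[OF i] by simp
  also have "\<dots> = prob (X 1 -` A \<inter> space M)"
    by (rule measure_distr) (auto intro: X_meas)
  finally show ?thesis .
qed

lemma W_point:
  assumes "length w = l"
  shows "prob {\<omega>\<in>space M. W k l \<omega> = w} = (\<Prod>t<l. prob (X 1 -` {w!t} \<inter> space M))"
proof (cases "l = 0")
  case True
  then show ?thesis using assms by (simp add: W_def prob_space)
next
  case False
  have eq: "{\<omega>\<in>space M. W k l \<omega> = w} = (\<Inter>i\<in>{k+1..k+l}. X i -` {w!(i-k-1)} \<inter> space M)"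
  proof -
    have "W k l \<omega> = w \<longleftrightarrow> (\<forall>i\<in>{k+1..k+l}. X i \<omega> = w!(i-k-1))" for \<omega>
    proof
      assume wW: "W k l \<omega> = w"
      then show "\<forall>i\<in>{k+1..k+l}. X i \<omega> = w!(i-k-1)"
      proof (intro ballI)
        fix i assume i: "i \<in> {k+1..k+l}"
        then have "w!(i-k-1) = X (k + (1 + (i-k-1))) \<omega>"
          unfolding wW[symmetric] W_def by (subst nth_map) (auto simp del: upt_Suc)
        then show "X i \<omega> = w!(i-k-1)" using i by auto
      qed
    next
      assume h: "\<forall>i\<in>{k+1..k+l}. X i \<omega> = w!(i-k-1)"
      show "W k l \<omega> = w"
        unfolding W_def using assms
        by (intro nth_equalityI) (auto simp del: upt_Suc simp: h[rule_format])
    qed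
    then show ?thesis using False by auto
  qed
  have "prob {\<omega>\<in>space M. W k l \<omega> = w} = (\<Prod>i\<in>{k+1..k+l}. prob (X i -` {w!(i-k-1)} \<inter> space M))"
    unfolding eq using False by (intro indep_varsD[OF ind]) auto
  also have "\<dots> = (\<Prod>i\<in>{k+1..k+l}. prob (X 1 -` {w!(i-k-1)} \<inter> space M))"
    by (intro prod.cong refl prob_X) auto
  also have "\<dots> = (\<Prod>t<l. prob (X 1 -` {w!t} \<inter> space M))"
    by (rule prod.reindex_bij_witness[where i="\<lambda>t. t+k+1" and j="\<lambda>i. i-k-1"]) auto
  finally show ?thesis .
qed

lemma W_point_gen: "prob {\<omega>\<in>space M. W k l \<omega> = w} = prob {\<omega>\<in>space M. W 0 l \<omega> = w}"
proof (cases "length w = l")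
  case True
  then show ?thesis by (simp add: W_point)
next
  case False
  then have "{\<omega>\<in>space M. W k l \<omega> = w} = {}" "{\<omega>\<in>space M. W 0 l \<omega> = w} = {}"
    by (auto simp: W_def)
  then show ?thesis by (simp only: measure_empty)
qed

lemma W_shift: "distr M (count_space UNIV) (W k l) = distr M (count_space UNIV) (W 0 l)"
proof (rule measure_eqI_countable[where A=UNIV])
  fix a :: "int list"
  have "emeasure (distr M (count_space UNIV) (W k l)) {a} = emeasure M {\<omega>\<in>space M. W k l \<omega> = a}" for k
    by (subst emeasure_distr[OF W_meas]) (auto intro!: arg_cong[where f="emeasure M"])
  then show "emeasure (distr M (count_space UNIV) (W k l)) {a} = emeasure (distr M (count_space UNIV) (W 0 l)) {a}"
    using W_point_gen by (simp add: emeasure_eq_measure)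
qed auto

lemma W_len: "length (W k l \<omega>) = l"
  by (simp add: W_def)

lemma W_append: "W 0 (k+l) \<omega> = W 0 k \<omega> @ W k l \<omega>"
proof (induction l)
  case 0
  then show ?case by (simp add: W_def)
next
  case (Suc l)
  then show ?case by (simp add: W_Suc del: upt_Suc)
qed

lemma prod_split_nat: "(\<Prod>t<k+l. g t) = (\<Prod>t<k. g t) * (\<Prod>t<l. g (k+t::nat)) " for g :: "nat \<Rightarrow> real"
  by (induction l) (auto simp: mult.assoc)

lemma W_pair_meas: "(\<lambda>\<omega>. (W 0 k \<omega>, W k l \<omega>)) \<in> measurable M (count_space UNIV)"
proof -
  have "(\<lambda>\<omega>. (W 0 k \<omega>, W k l \<omega>)) \<in> measurable M (count_space UNIV \<Otimes>\<^sub>M count_space UNIV)"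
    by (intro measurable_Pair W_meas)
  then show ?thesis by (simp add: pair_measure_countable)
qed

lemma W_indep:
  "prob {\<omega>\<in>space M. W 0 k \<omega> \<in> A \<and> W k l \<omega> \<in> B} =
   prob {\<omega>\<in>space M. W 0 k \<omega> \<in> A} * prob {\<omega>\<in>space M. W k l \<omega> \<in> B}"
proof -
  define d1 where "d1 = distr M (count_space UNIV) (W 0 k)"
  define d2 where "d2 = distr M (count_space UNIV) (W k l)"
  define D where "D = distr M (count_space UNIV) (\<lambda>\<omega>. (W 0 k \<omega>, W k l \<omega>))"
  have p1: "prob_space d1" unfolding d1_def by (rule prob_space_distr[OF W_meas])
  have p2: "prob_space d2" unfolding d2_def by (rule prob_space_distr[OF W_meas])
  interpret p2: prob_space d2 by (rule p2)
  interpret p1: prob_space d1 by (rule p1)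
  have sd1: "sets d1 = UNIV" "sets d2 = UNIV" by (auto simp: d1_def d2_def)
  have sp: "sets (d1 \<Otimes>\<^sub>M d2) = sets (count_space UNIV \<Otimes>\<^sub>M count_space (UNIV :: int list set))"
    by (rule sets_pair_measure_cong) (auto simp: d1_def d2_def)
  have DD: "D = d1 \<Otimes>\<^sub>M d2"
  proof (rule measure_eqI_countable[where A=UNIV])
    show "sets D = Pow UNIV" by (simp add: D_def)
    show "sets (d1 \<Otimes>\<^sub>M d2) = Pow UNIV" unfolding sp by (subst pair_measure_countable) auto
    show "countable (UNIV :: (int list \<times> int list) set)" by simp
    fix a :: "int list \<times> int list"
    obtain u v where a: "a = (u, v)" by (cases a)
    have lhs: "emeasure D {a} = emeasure M {\<omega>\<in>space M. W 0 k \<omega> = u \<and> W k l \<omega> = v}"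
      unfolding D_def a
      by (subst emeasure_distr[OF W_pair_meas]) (auto intro!: arg_cong[where f="emeasure M"])
    have e1: "emeasure d1 {u} = emeasure M {\<omega>\<in>space M. W 0 k \<omega> = u}"
      unfolding d1_def by (subst emeasure_distr[OF W_meas]) (auto intro!: arg_cong[where f="emeasure M"])
    have e2: "emeasure d2 {v} = emeasure M {\<omega>\<in>space M. W k l \<omega> = v}"
      unfolding d2_def by (subst emeasure_distr[OF W_meas]) (auto intro!: arg_cong[where f="emeasure M"])
    have rhs: "emeasure (d1 \<Otimes>\<^sub>M d2) {a} = emeasure d1 {u} * emeasure d2 {v}"
      unfolding a using p2.emeasure_pair_measure_Times[of "{u}" d1 "{v}"] sd1 by simp
    show "emeasure D {a} = emeasure (d1 \<Otimes>\<^sub>M d2) {a}"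
    proof (cases "length u = k \<and> length v = l")
      case True
      have "{\<omega>\<in>space M. W 0 k \<omega> = u \<and> W k l \<omega> = v} = {\<omega>\<in>space M. W 0 (k+l) \<omega> = u @ v}"
        using True W_len[of 0 k] W_len[of k l] by (auto simp: W_append append_eq_append_conv)
      then have "prob {\<omega>\<in>space M. W 0 k \<omega> = u \<and> W k l \<omega> = v}
          = (\<Prod>t<k+l. prob (X 1 -` {(u@v)!t} \<inter> space M))"
        using True by (simp add: W_point)
      also have "\<dots> = (\<Prod>t<k. prob (X 1 -` {u!t} \<inter> space M)) * (\<Prod>t<l. prob (X 1 -` {v!t} \<inter> space M))"
        unfolding prod_split_nat using True by (simp add: nth_append)
      also have "\<dots> = prob {\<omega>\<in>space M. W 0 k \<omega> = u} * prob {\<omega>\<in>space M. W k l \<omega> = v}"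
        using True by (simp add: W_point)
      finally show ?thesis unfolding lhs rhs e1 e2
        by (simp add: emeasure_eq_measure ennreal_mult)
    next
      case False
      then have "{\<omega>\<in>space M. W 0 k \<omega> = u \<and> W k l \<omega> = v} = {}"
        "{\<omega>\<in>space M. W 0 k \<omega> = u} = {} \<or> {\<omega>\<in>space M. W k l \<omega> = v} = {}"
        by (auto simp: W_def)
      then show ?thesis unfolding lhs rhs e1 e2 by (metis emeasure_empty mult_zero_left mult_zero_right)
    qed
  qed
  have "prob {\<omega>\<in>space M. W 0 k \<omega> \<in> A \<and> W k l \<omega> \<in> B} = measure D (A \<times> B)"
    unfolding D_def by (subst measure_distr[OF W_pair_meas]) (auto intro!: arg_cong[where f=prob])
  also have "\<dots> = measure d1 A * measure d2 B"
    unfolding DD measure_def using p2.emeasure_pair_measure_Times[of A d1 B] sd1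
    by (simp add: enn2real_mult)
  also have "\<dots> = prob {\<omega>\<in>space M. W 0 k \<omega> \<in> A} * prob {\<omega>\<in>space M. W k l \<omega> \<in> B}"
    unfolding d1_def d2_def
    by (subst (1 2) measure_distr[OF W_meas]) (auto intro!: arg_cong2[where f="(*)"] arg_cong[where f=prob])
  finally show ?thesis .
qed

lemma W_shift_prob: "prob {\<omega>\<in>space M. W k l \<omega> \<in> B} = prob {\<omega>\<in>space M. W 0 l \<omega> \<in> B}"
proof -
  have "prob {\<omega>\<in>space M. W k l \<omega> \<in> B} = measure (distr M (count_space UNIV) (W k l)) B" for k
    by (subst measure_distr[OF W_meas]) (auto intro!: arg_cong[where f=prob])
  then show ?thesis using W_shift by metis
qed

lemma W_append_gen: "W k (i+j) \<omega> = W k i \<omega> @ W (k+i) j \<omega>"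
proof (induction j)
  case 0
  then show ?case by (simp add: W_def)
next
  case (Suc j)
  then show ?case by (simp add: W_Suc add.assoc del: upt_Suc)
qed

lemma W_take: "i \<le> l \<Longrightarrow> take i (W k l \<omega>) = W k i \<omega>"
  using W_append_gen[of k i "l-i" \<omega>] W_len[of k i \<omega>] by simp

lemma psum_Suc: "partial_sum X (Suc n) \<omega> = partial_sum X n \<omega> + X (Suc n) \<omega>"
  by (simp add: partial_sum_def)

lemma psum_0: "partial_sum X 0 \<omega> = 0"
  by (simp add: partial_sum_def)

lemma W_sum: "sum_list (W k i \<omega>) = partial_sum X (k+i) \<omega> - partial_sum X k \<omega>"
proof (induction i)
  case 0
  then show ?case by (simp add: W_def)
next
  case (Suc i)
  then show ?case by (simp add: W_Suc psum_Suc del: upt_Suc)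
qed

lemma W_take_sum: "i \<le> l \<Longrightarrow> sum_list (take i (W k l \<omega>)) = partial_sum X (k+i) \<omega> - partial_sum X k \<omega>"
  by (simp add: W_take W_sum)

definition G :: "nat \<Rightarrow> int list \<Rightarrow> bool" where
  "G l w = (\<forall>i\<in>{1..l}. sum_list (take i w) mod int N \<noteq> 0)"

definition pp :: "nat \<Rightarrow> real" where
  "pp k = prob {\<omega>\<in>space M. partial_sum X k \<omega> mod int N = 0}"

definition qq :: "nat \<Rightarrow> real" where
  "qq l = prob {\<omega>\<in>space M. \<forall>i\<in>{1..l}. partial_sum X i \<omega> mod int N \<noteq> 0}"

lemma qq_W: "qq l = prob {\<omega>\<in>space M. W k l \<omega> \<in> {w. G l w}}"
proof -
  have "qq l = prob {\<omega>\<in>space M. W 0 l \<omega> \<in> {w. G l w}}"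
    unfolding qq_def G_def by (auto simp: W_take_sum psum_0 intro!: arg_cong[where f=prob])
  then show ?thesis using W_shift_prob[of k l "{w. G l w}"] by simp
qed

lemma pp_W: "pp k = prob {\<omega>\<in>space M. W 0 k \<omega> \<in> {u. sum_list u mod int N = 0}}"
  unfolding pp_def using W_sum[of 0 k] by (simp add: psum_0)

lemma E_prob:
  assumes "k \<le> m"
  shows "prob {\<omega>\<in>space M. partial_sum X k \<omega> mod int N = 0 \<and> (\<forall>j\<in>{k<..m}. partial_sum X j \<omega> mod int N \<noteq> 0)}
    = pp k * qq (m-k)"
proof -
  have "{\<omega>\<in>space M. partial_sum X k \<omega> mod int N = 0 \<and> (\<forall>j\<in>{k<..m}. partial_sum X j \<omega> mod int N \<noteq> 0)}
     = {\<omega>\<in>space M. W 0 k \<omega> \<in> {u. sum_list u mod int N = 0} \<and> W k (m-k) \<omega> \<in> {w. G (m-k) w}}"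
  proof -
    have "(\<forall>j\<in>{k<..m}. partial_sum X j \<omega> mod int N \<noteq> 0) \<longleftrightarrow> G (m-k) (W k (m-k) \<omega>)"
      if h: "partial_sum X k \<omega> mod int N = 0" for \<omega>
    proof -
      have e: "sum_list (take i (W k (m-k) \<omega>)) mod int N = partial_sum X (k+i) \<omega> mod int N"
        if "i \<le> m-k" for i
        using that h by (simp add: W_take_sum mod_diff_eq[symmetric])
      show ?thesis unfolding G_def
      proof
        assume a: "\<forall>j\<in>{k<..m}. partial_sum X j \<omega> mod int N \<noteq> 0"
        show "\<forall>i\<in>{1..m-k}. sum_list (take i (W k (m-k) \<omega>)) mod int N \<noteq> 0"
        proof
          fix i assume i: "i \<in> {1..m-k}"
          then have "k+i \<in> {k<..m}" by auto
          then show "sum_list (take i (W k (m-k) \<omega>)) mod int N \<noteq> 0" using a e[of i] i by auto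
        qed
      next
        assume a: "\<forall>i\<in>{1..m-k}. sum_list (take i (W k (m-k) \<omega>)) mod int N \<noteq> 0"
        show "\<forall>j\<in>{k<..m}. partial_sum X j \<omega> mod int N \<noteq> 0"
        proof
          fix j assume j: "j \<in> {k<..m}"
          then have "j - k \<in> {1..m-k}" by auto
          then show "partial_sum X j \<omega> mod int N \<noteq> 0" using a e[of "j-k"] j by auto
        qed
      qed
    qed
    note key = this
    show ?thesis
    proof (rule Collect_cong)
      fix \<omega>
      show "(\<omega> \<in> space M \<and> partial_sum X k \<omega> mod int N = 0 \<and> (\<forall>j\<in>{k<..m}. partial_sum X j \<omega> mod int N \<noteq> 0)) =
        (\<omega> \<in> space M \<and> W 0 k \<omega> \<in> {u. sum_list u mod int N = 0} \<and> W k (m-k) \<omega> \<in> {w. G (m-k) w})"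
        unfolding mem_Collect_eq W_sum[of 0 k \<omega>] psum_0 diff_zero add_0 using key[of \<omega>] by (intro conj_cong refl) simp_all
    qed
  qed
  then show ?thesis
    using W_indep[of k "{u. sum_list u mod int N = 0}" "m-k" "{w. G (m-k) w}"] pp_W[of k] qq_W[of "m-k" k]
    by simp
qed

lemma sets_W: "{\<omega>\<in>space M. P (W k l \<omega>)} \<in> sets M"
proof -
  have "{\<omega>\<in>space M. P (W k l \<omega>)} = W k l -` {w. P w} \<inter> space M" by auto
  then show ?thesis using measurable_sets[OF W_meas, of "{w. P w}" k l] by simp
qed

lemma psum_W: "i \<le> m \<Longrightarrow> partial_sum X i \<omega> = sum_list (take i (W 0 m \<omega>))"
  by (simp add: W_take_sum psum_0)

lemma I1: "(\<Sum>k\<le>m. pp k * qq (m-k)) = 1"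
proof -
  define E where "E k = {\<omega>\<in>space M. partial_sum X k \<omega> mod int N = 0 \<and> (\<forall>j\<in>{k<..m}. partial_sum X j \<omega> mod int N \<noteq> 0)}" for k
  have Es: "E k \<in> sets M" if "k \<le> m" for k
  proof -
    have "E k = {\<omega>\<in>space M. (\<lambda>w. sum_list (take k w) mod int N = 0 \<and> (\<forall>j\<in>{k<..m}. sum_list (take j w) mod int N \<noteq> 0)) (W 0 m \<omega>)}"
      unfolding E_def using that by (auto simp: psum_W[of _ m])
    then show ?thesis using sets_W by simp
  qed
  have disj: "disjoint_family_on E {..m}"
    unfolding disjoint_family_on_def
  proof (intro ballI impI)
    fix k k' assume k: "k \<in> {..m}" and k': "k' \<in> {..m}" and ne: "k \<noteq> k'"
    show "E k \<inter> E k' = {}"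
    proof (cases "k < k'")
      case True then show ?thesis using k' unfolding E_def by (auto simp: mod_eq_0_iff_dvd)
    next
      case False then have "k' < k" using ne by simp
      then show ?thesis using k unfolding E_def by (auto simp: mod_eq_0_iff_dvd)
    qed
  qed
  have un: "(\<Union>k\<in>{..m}. E k) = space M"
  proof
    show "(\<Union>k\<in>{..m}. E k) \<subseteq> space M" unfolding E_def by auto
  next
    show "space M \<subseteq> (\<Union>k\<in>{..m}. E k)"
    proof
      fix \<omega> assume w: "\<omega> \<in> space M"
      define K where "K = {k\<in>{..m}. partial_sum X k \<omega> mod int N = 0}"
      have fin: "finite K" "0 \<in> K" unfolding K_def by (auto simp: psum_0)
      define k where "k = Max K"
      have kK: "k \<in> K" unfolding k_def using fin by (intro Max_in) auto
      have "\<forall>j\<in>{k<..m}. partial_sum X j \<omega> mod int N \<noteq> 0"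
      proof (intro ballI notI)
        fix j assume j: "j \<in> {k<..m}" and "partial_sum X j \<omega> mod int N = 0"
        then have "j \<in> K" unfolding K_def by auto
        then have "j \<le> k" unfolding k_def using fin by simp
        then show False using j by simp
      qed
      then have "\<omega> \<in> E k" using kK w unfolding E_def K_def by auto
      then show "\<omega> \<in> (\<Union>k\<in>{..m}. E k)" using kK unfolding K_def by auto
    qed
  qed
  have "1 = prob (\<Union>k\<in>{..m}. E k)" using un prob_space by simp
  also have "\<dots> = (\<Sum>k\<le>m. prob (E k))"
    by (rule finite_measure_finite_Union) (use Es disj in auto)
  also have "\<dots> = (\<Sum>k\<le>m. pp k * qq (m-k))"
    by (intro sum.cong refl) (simp add: E_def E_prob)
  finally show ?thesis by simp
qed

lemma C_prob:
  assumes "n \<le> N"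
  shows "prob {\<omega>\<in>space M. \<forall>j\<in>{n<..N}. (partial_sum X j \<omega> - partial_sum X n \<omega>) mod int N \<noteq> 0} = qq (N-n)"
proof -
  have "{\<omega>\<in>space M. \<forall>j\<in>{n<..N}. (partial_sum X j \<omega> - partial_sum X n \<omega>) mod int N \<noteq> 0}
      = {\<omega>\<in>space M. W n (N-n) \<omega> \<in> {w. G (N-n) w}}"
  proof (rule Collect_cong)
    fix \<omega>
    have "(\<forall>j\<in>{n<..N}. (partial_sum X j \<omega> - partial_sum X n \<omega>) mod int N \<noteq> 0) \<longleftrightarrow> G (N-n) (W n (N-n) \<omega>)"
    proof
      assume a: "\<forall>j\<in>{n<..N}. (partial_sum X j \<omega> - partial_sum X n \<omega>) mod int N \<noteq> 0"
      show "G (N-n) (W n (N-n) \<omega>)" unfolding G_def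
      proof
        fix i assume i: "i \<in> {1..N-n}"
        then have "n+i \<in> {n<..N}" by auto
        then show "sum_list (take i (W n (N-n) \<omega>)) mod int N \<noteq> 0"
          using a i by (simp add: W_take_sum)
      qed
    next
      assume a: "G (N-n) (W n (N-n) \<omega>)"
      show "\<forall>j\<in>{n<..N}. (partial_sum X j \<omega> - partial_sum X n \<omega>) mod int N \<noteq> 0"
      proof
        fix j assume j: "j \<in> {n<..N}"
        then have j1: "j - n \<in> {1..N-n}" "j - n \<le> N - n" "n + (j-n) = j" by auto
        then have "sum_list (take (j-n) (W n (N-n) \<omega>)) mod int N \<noteq> 0" proof -
          have "\<forall>i\<in>{1..N-n}. sum_list (take i (W n (N-n) \<omega>)) mod int N \<noteq> 0" using a unfolding G_def .
          then show ?thesis using j1(1) apply - apply (drule (1) bspec) apply assumption done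
        qed
        then show "(partial_sum X j \<omega> - partial_sum X n \<omega>) mod int N \<noteq> 0"
          using W_take_sum[of "j-n" "N-n" n \<omega>] j1 by simp
      qed
    qed
    then show "(\<omega>\<in>space M \<and> (\<forall>j\<in>{n<..N}. (partial_sum X j \<omega> - partial_sum X n \<omega>) mod int N \<noteq> 0)) =
        (\<omega>\<in>space M \<and> W n (N-n) \<omega> \<in> {w. G (N-n) w})" by simp
  qed
  then show ?thesis using qq_W[of "N-n" n] by simp
qed

lemma sum_B_C:
  "(\<Sum>u\<in>{0..<N}. prob {\<omega>\<in>space M. \<exists>n\<in>{1..N}. (int u + partial_sum X n \<omega>) mod int N = 0})
 = (\<Sum>n\<in>{1..N}. prob {\<omega>\<in>space M. \<forall>j\<in>{n<..N}. (partial_sum X j \<omega> - partial_sum X n \<omega>) mod int N \<noteq> 0})"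
  (is "(\<Sum>u\<in>_. prob (?B u)) = (\<Sum>n\<in>_. prob (?C n))")
proof -
  have Bs: "?B u \<in> sets M" for u
  proof -
    have "?B u = {\<omega>\<in>space M. (\<lambda>w. \<exists>n\<in>{1..N}. (int u + sum_list (take n w)) mod int N = 0) (W 0 N \<omega>)}"
      by (auto simp: psum_W[of _ N])
    then show ?thesis using sets_W by simp
  qed
  have Cs: "?C n \<in> sets M" for n
  proof -
    have "?C n = {\<omega>\<in>space M. (\<lambda>w. \<forall>j\<in>{n<..N}. (sum_list (take j w) - sum_list (take n w)) mod int N \<noteq> 0) (W 0 N \<omega>)}"
      by (auto simp: psum_W[of _ N])
    then show ?thesis using sets_W by simp
  qed
  have intB: "integrable M (indicator (?B u) :: 'a \<Rightarrow> real)" for u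
    using Bs by (intro integrable_real_indicator) (auto simp: less_top[symmetric])
  have intC: "integrable M (indicator (?C n) :: 'a \<Rightarrow> real)" for n
    using Cs by (intro integrable_real_indicator) (auto simp: less_top[symmetric])
  have cnt: "(\<Sum>u\<in>S. indicator (P u) \<omega>) = real (card {u\<in>S. \<omega> \<in> P u})" if "finite S" for S :: "nat set" and P \<omega>
  proof -
    have "(\<Sum>u\<in>S. indicator (P u) \<omega> :: real) = (\<Sum>u\<in>S. if \<omega> \<in> P u then 1 else 0)"
      by (simp add: indicator_def of_bool_def)
    also have "\<dots> = real (card {u\<in>S. \<omega> \<in> P u})"
      using that by (simp add: sum.If_cases Int_def)
    finally show ?thesis .
  qed
  have "(\<Sum>u\<in>{0..<N}. prob (?B u)) = (\<Sum>u\<in>{0..<N}. integral\<^sup>L M (indicator (?B u)))"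
    by (intro sum.cong refl) (simp add: Int_absorb2)
  also have "\<dots> = integral\<^sup>L M (\<lambda>\<omega>. \<Sum>u\<in>{0..<N}. indicator (?B u) \<omega>)"
    using Bochner_Integration.integral_sum[where I="{0..<N}" and f="\<lambda>u. indicator (?B u)", OF intB] by simp
  also have "\<dots> = integral\<^sup>L M (\<lambda>\<omega>. \<Sum>n\<in>{1..N}. indicator (?C n) \<omega>)"
  proof (rule Bochner_Integration.integral_cong[OF refl])
    fix \<omega> assume w: "\<omega> \<in> space M"
    have "(\<Sum>u\<in>{0..<N}. indicator (?B u) \<omega> :: real) = real (card {u\<in>{0..<N}. \<omega> \<in> ?B u})"
      by (rule cnt) simp
    also have "{u\<in>{0..<N}. \<omega> \<in> ?B u} = {u\<in>{0..<N}. \<exists>n\<in>{1..N}. (int u + partial_sum X n \<omega>) mod int N = 0}"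
      using w by auto
    also have "card \<dots> = card {n\<in>{1..N}. \<forall>j\<in>{n<..N}. (partial_sum X j \<omega> - partial_sum X n \<omega>) mod int N \<noteq> 0}"
      using N2 by (intro card_residues) auto
    also have "{n\<in>{1..N}. \<forall>j\<in>{n<..N}. (partial_sum X j \<omega> - partial_sum X n \<omega>) mod int N \<noteq> 0} = {n\<in>{1..N}. \<omega> \<in> ?C n}"
      using w by auto
    also have "real (card \<dots>) = (\<Sum>n\<in>{1..N}. indicator (?C n) \<omega>)"
      by (rule cnt[symmetric]) simp
    finally show "(\<Sum>u\<in>{0..<N}. indicator (?B u) \<omega>) = (\<Sum>n\<in>{1..N}. indicator (?C n) \<omega> :: real)" .
  qed
  also have "\<dots> = (\<Sum>n\<in>{1..N}. integral\<^sup>L M (indicator (?C n)))"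
    using Bochner_Integration.integral_sum[where I="{1..N}" and f="\<lambda>n. indicator (?C n)", OF intC] by simp
  also have "\<dots> = (\<Sum>n\<in>{1..N}. prob (?C n))"
    by (intro sum.cong refl) (simp add: Int_absorb2)
  finally show ?thesis .
qed

lemma prodspace:
  "measure (rw_mod_space N M) {p \<in> space (rw_mod_space N M). \<exists>n\<in>{1..N}. R_mod N X n p = 0}
   = (\<Sum>u\<in>{0..<N}. prob {\<omega>\<in>space M. \<exists>n\<in>{1..N}. (int u + partial_sum X n \<omega>) mod int N = 0}) / real N"
  (is "measure _ ?A = (\<Sum>u\<in>_. prob (?B u)) / _")
proof -
  define Q where "Q = pmf_of_set {0..<N}"
  have RM: "rw_mod_space N M = measure_pmf Q \<Otimes>\<^sub>M M" unfolding rw_mod_space_def Q_def ..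
  have fstm: "(\<lambda>p. fst p) \<in> measurable (measure_pmf Q \<Otimes>\<^sub>M M) (count_space UNIV)"
    by (rule measurable_compose[OF measurable_fst]) (simp add: measurable_pmf_measure1)
  have sndm: "(\<lambda>p. W 0 N (snd p)) \<in> measurable (measure_pmf Q \<Otimes>\<^sub>M M) (count_space UNIV)"
    by (rule measurable_compose[OF measurable_snd W_meas])
  have fm: "(\<lambda>p. (fst p, W 0 N (snd p))) \<in> measurable (measure_pmf Q \<Otimes>\<^sub>M M) (count_space UNIV)"
  proof -
    have "(\<lambda>p. (fst p, W 0 N (snd p))) \<in> measurable (measure_pmf Q \<Otimes>\<^sub>M M) (count_space UNIV \<Otimes>\<^sub>M count_space UNIV)"
      by (intro measurable_Pair fstm sndm)
    then show ?thesis by (simp add: pair_measure_countable)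
  qed
  define S where "S = {(u::nat, w). \<exists>n\<in>{1..N}. (int u + sum_list (take n w)) mod int N = 0}"
  have Aeq: "?A = (\<lambda>p. (fst p, W 0 N (snd p))) -` S \<inter> space (measure_pmf Q \<Otimes>\<^sub>M M)"
    unfolding RM S_def R_mod_def by (auto simp: psum_W[of _ N] mod_eq_0_iff_dvd)
  have As: "?A \<in> sets (measure_pmf Q \<Otimes>\<^sub>M M)"
    unfolding Aeq by (rule measurable_sets[OF fm]) simp
  have sec: "Pair u -` ?A = ?B u" for u
    unfolding RM R_mod_def by (auto simp: space_pair_measure)
  have "emeasure (measure_pmf Q \<Otimes>\<^sub>M M) ?A = \<integral>\<^sup>+ u. emeasure M (Pair u -` ?A) \<partial>measure_pmf Q"
    using As unfolding RM by (rule emeasure_pair_measure_alt)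
  also have "\<dots> = (\<Sum>u\<in>{0..<N}. emeasure M (?B u)) / of_nat N"
    unfolding Q_def sec using N2 by (subst nn_integral_pmf_of_set) auto
  also have "\<dots> = ennreal ((\<Sum>u\<in>{0..<N}. prob (?B u)) / real N)"
    using N2 by (simp add: emeasure_eq_measure sum_ennreal divide_ennreal ennreal_of_nat_eq_real_of_nat sum_nonneg)
  finally have "emeasure (rw_mod_space N M) ?A = ennreal ((\<Sum>u\<in>{0..<N}. prob (?B u)) / real N)"
    unfolding RM .
  then show ?thesis by (rule measure_eq_emeasure_eq_ennreal[rotated]) (auto intro!: sum_nonneg divide_nonneg_nonneg)
qed

lemma pp0: "pp 0 = 1"
  unfolding pp_def by (simp add: psum_0 prob_space)

lemma tri: "(\<Sum>(i,j)\<in>{(i,j). i+j<T}. pp i * qq j) = real T"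
proof -
  have "(\<Sum>(i,j)\<in>{(i,j). i+j<T}. pp i * qq j) = (\<Sum>k<T. \<Sum>i\<le>k. pp i * qq (k-i))"
    by (rule sum.triangle_reindex)
  also have "\<dots> = (\<Sum>k<T. 1)" using I1 by simp
  finally show ?thesis by simp
qed

lemma finite_tri: "finite {(i::nat,j::nat). i+j<T}"
  by (rule finite_subset[of _ "{..<T} \<times> {..<T}"]) auto

lemma main:
  "1 / (1 + (\<Sum>i\<in>{1..N-1}. measure M {\<omega>\<in>space M. partial_sum X i \<omega> mod int N = 0}))
           \<le> measure (rw_mod_space N M)
               {p \<in> space (rw_mod_space N M). \<exists>n\<in>{1..N}. R_mod N X n p = 0}
      \<and> measure (rw_mod_space N M)
               {p \<in> space (rw_mod_space N M). \<exists>n\<in>{1..N}. R_mod N X n p = 0}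
           \<le> 2 / (1 + (\<Sum>i\<in>{1..N-1}. measure M {\<omega>\<in>space M. partial_sum X i \<omega> mod int N = 0}))"
proof -
  define Sp where "Sp = (\<Sum>k<N. pp k)"
  define Sq where "Sq = (\<Sum>j<N. qq j)"
  have ppn: "pp k \<ge> 0" for k unfolding pp_def by simp
  have qqn: "qq k \<ge> 0" for k unfolding qq_def by simp
  have den: "1 + (\<Sum>i\<in>{1..N-1}. measure M {\<omega>\<in>space M. partial_sum X i \<omega> mod int N = 0}) = Sp"
  proof -
    have "{..<N} = insert 0 {1..N-1}" using N2 by auto
    then have "Sp = pp 0 + (\<Sum>i\<in>{1..N-1}. pp i)" unfolding Sp_def by simp
    then show ?thesis using pp0 unfolding pp_def by simp
  qed
  have P: "measure (rw_mod_space N M) {p \<in> space (rw_mod_space N M). \<exists>n\<in>{1..N}. R_mod N X n p = 0} = Sq / real N"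
  proof -
    have "(\<Sum>n\<in>{1..N}. qq (N-n)) = Sq" unfolding Sq_def
      by (rule sum.reindex_bij_witness[where i="\<lambda>j. N - j" and j="\<lambda>n. N - n"]) auto
    then show ?thesis unfolding prodspace sum_B_C using C_prob by simp
  qed
  have prodeq: "Sp * Sq = (\<Sum>(i,j)\<in>{..<N} \<times> {..<N}. pp i * qq j)"
    unfolding Sp_def Sq_def sum_product sum.cartesian_product ..
  have low: "real N \<le> Sp * Sq"
  proof -
    have "real N = (\<Sum>(i,j)\<in>{(i,j). i+j<N}. pp i * qq j)" using tri by simp
    also have "\<dots> \<le> (\<Sum>(i,j)\<in>{..<N} \<times> {..<N}. pp i * qq j)"
      by (rule sum_mono2) (auto intro: mult_nonneg_nonneg ppn qqn)
    finally show ?thesis using prodeq by simp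
  qed
  have up: "Sp * Sq \<le> 2 * real N"
  proof -
    have "(\<Sum>(i,j)\<in>{..<N} \<times> {..<N}. pp i * qq j) \<le> (\<Sum>(i,j)\<in>{(i,j). i+j<2*N-1}. pp i * qq j)"
      by (rule sum_mono2[OF finite_tri]) (auto intro: mult_nonneg_nonneg ppn qqn)
    also have "\<dots> = real (2*N-1)" using tri by simp
    finally show ?thesis using prodeq N2 by simp
  qed
  have Sp1: "Sp \<ge> 1"
  proof -
    have "Sp = pp 0 + (\<Sum>k\<in>{..<N}-{0}. pp k)" unfolding Sp_def using N2
      by (subst sum.remove[of _ 0]) auto
    moreover have "(\<Sum>k\<in>{..<N}-{0}. pp k) \<ge> 0" by (intro sum_nonneg ppn)
    ultimately show ?thesis using pp0 by simp
  qed
  have Npos: "real N > 0" using N2 by simp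
  have "1 / Sp \<le> Sq / real N" using low Sp1 Npos by (rule l1[rotated -1]) 
  moreover have "Sq / real N \<le> 2 / Sp" using up Sp1 Npos by (rule l2[rotated -1])
  ultimately show ?thesis unfolding den P by simp
qed

end

theorem corollary2:
  fixes M :: "'a measure" and X :: "nat \<Rightarrow> 'a \<Rightarrow> int" and N :: nat
  assumes "prob_space M"
    and "prob_space.indep_vars M (\<lambda>_. count_space UNIV) X {1..}"
    and "\<And>i. i \<ge> 1 \<Longrightarrow> distr M (count_space UNIV) (X i) = distr M (count_space UNIV) (X 1)"
    and "N \<ge> 2"
  shows "1 / (1 + (\<Sum>i\<in>{1..N-1}. measure M {\<omega>\<in>space M. partial_sum X i \<omega> mod int N = 0}))
           \<le> measure (rw_mod_space N M)
               {p \<in> space (rw_mod_space N M). \<exists>n\<in>{1..N}. R_mod N X n p = 0}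
      \<and> measure (rw_mod_space N M)
               {p \<in> space (rw_mod_space N M). \<exists>n\<in>{1..N}. R_mod N X n p = 0}
           \<le> 2 / (1 + (\<Sum>i\<in>{1..N-1}. measure M {\<omega>\<in>space M. partial_sum X i \<omega> mod int N = 0}))"
proof -
  interpret rws M X N
    by (rule rws.intro[OF assms(1) rws_axioms.intro[OF assms(2-4)]])
  show ?thesis by (rule main)
qed

end
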